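(* Let $1<p\le2$, $\varepsilon\in(0,1]$, $\widehat\Omega\subset\mathbb{H}^n$ open and $v\in C^2(\widehat\Omega)$ with $\nabla_\varepsilon v\ne0$ in $\widehat\Omega$. If $v$ is $p$-harmonic in $\widehat\Omega$ with respect to $|\cdot|_\varepsilon$, then in $\widehat\Omega$ $$2|\nabla_\varepsilon v|_\varepsilon^2\,|\overline D^2_\varepsilon v|^2\ge\frac12\Big(1+\frac{(p-1)^2}{2n}\Big)\Big\langle\frac{\nabla_\varepsilon v}{|\nabla_\varepsilon v|_\varepsilon},\nabla_\varepsilon|\nabla_\varepsilon v|_\varepsilon^2\Big\rangle_\varepsilon^2 .$$
   Context: $\mathbb{H}^n=\mathbb{R}^{2n+1}$ with $X_i=\partial_{x_i}-\frac{y_i}2\partial_t$, $Y_i=\partial_{y_i}+\frac{x_i}2\partial_t$, $T_\varepsilon=\varepsilon\partial_t$; orthonormal frame $\{E_1,\dots,E_{2n+1}\}=\{X_1,\dots,X_n,Y_1,\dots,Y_n,T_\varepsilon\}$ of the Riemannian metric $\langle\cdot,\cdot\rangle_\varepsilon$; $\nabla_\varepsilon v=\sum_j(E_jv)E_j$; rough Hessian $\overline D^2_\varepsilon v=(E_jE_iv)_{i,j}$ with $|\overline D^2_\varepsilon v|^2=\sum_{i,j}(E_jE_iv)^2$. $p$-harmonic: $\mathrm{div}_\varepsilon(|\nabla_\varepsilon v|_\varepsilon^{p-2}\nabla_\varepsilon v)=0$ with $\mathrm{div}_\varepsilon(\sum_j\varphi_jE_j)=\sum_jE_j\varphi_j$.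 *)

theory Defs
  imports "HOL-Analysis.Analysis"
begin

text \<open>The Heisenberg group H^n = R^(2n+1) with coordinates (x,y,t), x,y in R^n.
  n is encoded by the finite index type 'n (n = CARD('n)).\<close>
type_synonym 'n heis = "(real^'n) \<times> (real^'n) \<times> real"

text \<open>Frame indices: Inl i = X_i, Inr (Inl i) = Y_i, Inr (Inr ()) = T_eps.\<close>
type_synonym 'n hidx = "'n + 'n + unit"

definition Xfield :: "'n::finite \<Rightarrow> 'n heis \<Rightarrow> 'n heis" where
  "Xfield i q = (axis i 1, 0, - (fst (snd q)) $ i / 2)"

definition Yfield :: "'n::finite \<Rightarrow> 'n heis \<Rightarrow> 'n heis" where
  "Yfield i q = (0, axis i 1, (fst q) $ i / 2)"

definition Tfield :: "real \<Rightarrow> 'n::finite heis \<Rightarrow> 'n heis" where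
  "Tfield \<epsilon> q = (0, 0, \<epsilon>)"

definition Efield :: "real \<Rightarrow> 'n::finite hidx \<Rightarrow> 'n heis \<Rightarrow> 'n heis" where
  "Efield \<epsilon> k = (case k of Inl i \<Rightarrow> Xfield i | Inr (Inl i) \<Rightarrow> Yfield i | Inr (Inr _) \<Rightarrow> Tfield \<epsilon>)"

definition Eop :: "real \<Rightarrow> 'n::finite hidx \<Rightarrow> ('n heis \<Rightarrow> real) \<Rightarrow> 'n heis \<Rightarrow> real" where
  "Eop \<epsilon> k v q = frechet_derivative v (at q) (Efield \<epsilon> k q)"

definition hgrad :: "real \<Rightarrow> ('n::finite heis \<Rightarrow> real) \<Rightarrow> 'n heis \<Rightarrow> 'n hidx \<Rightarrow> real" where
  "hgrad \<epsilon> v q = (\<lambda>k. Eop \<epsilon> k v q)"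

text \<open>Inner product and norm w.r.t. the metric making the frame orthonormal.\<close>
definition hinner :: "('n::finite hidx \<Rightarrow> real) \<Rightarrow> ('n hidx \<Rightarrow> real) \<Rightarrow> real" where
  "hinner a b = (\<Sum>k\<in>UNIV. a k * b k)"

definition hnorm :: "('n::finite hidx \<Rightarrow> real) \<Rightarrow> real" where
  "hnorm a = sqrt (hinner a a)"

definition hess_norm2 :: "real \<Rightarrow> ('n::finite heis \<Rightarrow> real) \<Rightarrow> 'n heis \<Rightarrow> real" where
  "hess_norm2 \<epsilon> v q = (\<Sum>i\<in>UNIV. \<Sum>j\<in>UNIV. (Eop \<epsilon> j (Eop \<epsilon> i v) q)\<^sup>2)"

definition p_harmonic_on :: "real \<Rightarrow> real \<Rightarrow> 'n::finite heis set \<Rightarrow> ('n heis \<Rightarrow> real) \<Rightarrow> bool" where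
  "p_harmonic_on \<epsilon> p \<Omega> v \<longleftrightarrow>
     (\<forall>q\<in>\<Omega>. (\<Sum>k\<in>UNIV. Eop \<epsilon> k (\<lambda>z. hnorm (hgrad \<epsilon> v z) powr (p - 2) * Eop \<epsilon> k v z) q) = 0)"

definition C2_on :: "'a::euclidean_space set \<Rightarrow> ('a \<Rightarrow> real) \<Rightarrow> bool" where
  "C2_on \<Omega> v \<longleftrightarrow>
     (\<exists>D1 :: 'a \<Rightarrow> 'a \<Rightarrow>\<^sub>L real. \<exists>D2 :: 'a \<Rightarrow> 'a \<Rightarrow>\<^sub>L ('a \<Rightarrow>\<^sub>L real).
        (\<forall>x\<in>\<Omega>. (v has_derivative blinfun_apply (D1 x)) (at x)) \<and>
        (\<forall>x\<in>\<Omega>. (D1 has_derivative blinfun_apply (D2 x)) (at x)) \<and>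
        continuous_on \<Omega> D1 \<and> continuous_on \<Omega> D2)"

end

theory Submission
  imports Defs
begin

lemma Efield_diff: fixes q :: "'n::finite heis" shows "Efield \<epsilon> k differentiable (at q)"
proof -
  have a: "(\<lambda>x::'n heis. fst (snd x) $ i) differentiable at q" for i
    by (rule bounded_linear_imp_differentiable, intro bounded_linear_compose[OF bounded_linear_vec_nth]
        bounded_linear_compose[OF bounded_linear_fst] bounded_linear_snd)
  have b: "(\<lambda>x::'n heis. fst x $ i) differentiable at q" for i
    by (rule bounded_linear_imp_differentiable, intro bounded_linear_compose[OF bounded_linear_vec_nth]
         bounded_linear_fst)
  show ?thesis
  unfolding Efield_def Xfield_def Yfield_def Tfield_def
  by (cases k rule: sum.exhaust)
   (auto simp: split: sum.splits intro!: derivative_intros differentiable_const a b)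
qed

lemma alg:
  fixes H :: "'i::finite \<Rightarrow> 'i \<Rightarrow> real" and g :: "'i \<Rightarrow> real"
  assumes s: "s = (\<Sum>i\<in>UNIV. g i * g i)" "s > 0" and N: "real CARD('i) = N + 1" "N > 0"
    and w: "w = (\<Sum>i\<in>UNIV. \<Sum>j\<in>UNIV. g i * g j * H i j)" and t: "t = (\<Sum>i\<in>UNIV. H i i)"
  shows "(\<Sum>i\<in>UNIV. \<Sum>j\<in>UNIV. (H i j)\<^sup>2) \<ge> w\<^sup>2 / s\<^sup>2 + (t - w/s)\<^sup>2 / N"
proof -
  define dl where "dl i j = (if i = j then 1 else 0 :: real)" for i j :: 'i
  define e where "e i j = dl i j - g i * g j / s" for i j
  define \<alpha> where "\<alpha> = w / s\<^sup>2"
  define \<beta> where "\<beta> = (t - w/s) / N"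
  have sq: "(\<Sum>i\<in>UNIV. \<Sum>j\<in>UNIV. (g i * g j)\<^sup>2) = s\<^sup>2"
    by (simp add: s power2_eq_square sum_product algebra_simps)
  have d: "(\<Sum>i\<in>UNIV. \<Sum>j\<in>UNIV. dl i j * f i j) = (\<Sum>i\<in>UNIV. f i i)" for f :: "'i \<Rightarrow> 'i \<Rightarrow> real"
  proof -
    have "(\<Sum>j\<in>UNIV. dl i j * f i j) = f i i" for i
      by (simp add: dl_def if_distrib[of "\<lambda>x. x * _"] cong: if_cong)
    then show ?thesis by simp
  qed
  have d2: "dl i j * dl i j = dl i j" for i j by (simp add: dl_def)
  have He: "(\<Sum>i\<in>UNIV. \<Sum>j\<in>UNIV. H i j * e i j) = t - w/s"
  proof -
    have "(\<Sum>i\<in>UNIV. \<Sum>j\<in>UNIV. H i j * e i j) = (\<Sum>i\<in>UNIV. \<Sum>j\<in>UNIV. dl i j * H i j)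
       - (\<Sum>i\<in>UNIV. \<Sum>j\<in>UNIV. g i * g j * H i j) / s"
      by (simp add: e_def right_diff_distrib sum_subtractf sum_divide_distrib algebra_simps)
    then show ?thesis using d[of H] by (simp add: t w)
  qed
  have ge: "(\<Sum>i\<in>UNIV. \<Sum>j\<in>UNIV. g i * g j * e i j) = 0"
  proof -
    have "(\<Sum>i\<in>UNIV. \<Sum>j\<in>UNIV. g i * g j * e i j) = (\<Sum>i\<in>UNIV. \<Sum>j\<in>UNIV. dl i j * (g i * g j))
       - (\<Sum>i\<in>UNIV. \<Sum>j\<in>UNIV. (g i * g j)\<^sup>2) / s"
      by (simp add: e_def right_diff_distrib sum_subtractf sum_divide_distrib algebra_simps power2_eq_square)
    also have "\<dots> = s - s\<^sup>2 / s" using d[of "\<lambda>i j. g i * g j"] sq s by simp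
    finally show ?thesis using s by (simp add: power2_eq_square)
  qed
  have ee: "(\<Sum>i\<in>UNIV. \<Sum>j\<in>UNIV. (e i j)\<^sup>2) = N"
  proof -
    have "(\<Sum>i\<in>UNIV. \<Sum>j\<in>UNIV. (e i j)\<^sup>2) = (\<Sum>i\<in>UNIV. \<Sum>j\<in>UNIV. dl i j * 1)
       - 2 * (\<Sum>i\<in>UNIV. \<Sum>j\<in>UNIV. dl i j * (g i * g j)) / s
       + (\<Sum>i\<in>UNIV. \<Sum>j\<in>UNIV. (g i * g j)\<^sup>2) / s\<^sup>2"
      by (simp add: e_def power2_eq_square right_diff_distrib sum_subtractf sum.distrib sum_divide_distrib
          sum_distrib_left algebra_simps d2)
    also have "\<dots> = real CARD('i) - 2 * s / s + s\<^sup>2/s\<^sup>2"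
      using d[of "\<lambda>i j. g i * g j"] d[of "\<lambda>i j. 1"] sq s by simp
    finally show ?thesis using s N by simp
  qed
  have "0 \<le> (\<Sum>i\<in>UNIV. \<Sum>j\<in>UNIV. (H i j - \<alpha> * (g i * g j) - \<beta> * e i j)\<^sup>2)"
    by (intro sum_nonneg) auto
  also have "\<dots> = (\<Sum>i\<in>UNIV. \<Sum>j\<in>UNIV. (H i j)\<^sup>2) - 2 * \<alpha> * (\<Sum>i\<in>UNIV. \<Sum>j\<in>UNIV. g i * g j * H i j)
     - 2 * \<beta> * (\<Sum>i\<in>UNIV. \<Sum>j\<in>UNIV. H i j * e i j) + \<alpha>\<^sup>2 * (\<Sum>i\<in>UNIV. \<Sum>j\<in>UNIV. (g i * g j)\<^sup>2)
     + \<beta>\<^sup>2 * (\<Sum>i\<in>UNIV. \<Sum>j\<in>UNIV. (e i j)\<^sup>2) + 2 * \<alpha> * \<beta> * (\<Sum>i\<in>UNIV. \<Sum>j\<in>UNIV. g i * g j * e i j)"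
    by (simp add: power2_eq_square sum_subtractf sum.distrib sum_distrib_left algebra_simps)
  also have "\<dots> = (\<Sum>i\<in>UNIV. \<Sum>j\<in>UNIV. (H i j)\<^sup>2) - w\<^sup>2 / s\<^sup>2 - (t - w/s)\<^sup>2 / N"
    unfolding He ge ee sq w[symmetric] \<alpha>_def \<beta>_def using s N
    by (simp add: field_simps power2_eq_square)
  finally show ?thesis by simp
qed

lemma Eop_diff:
  fixes v :: "'n::finite heis \<Rightarrow> real"
  assumes "open \<Omega>" "C2_on \<Omega> v" "q \<in> \<Omega>"
  shows "Eop \<epsilon> i v differentiable at q"
proof -
  obtain D1 :: "'n heis \<Rightarrow> 'n heis \<Rightarrow>\<^sub>L real" and D2 where
    d1: "\<forall>x\<in>\<Omega>. (v has_derivative blinfun_apply (D1 x)) (at x)" and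
    d2: "\<forall>x\<in>\<Omega>. (D1 has_derivative blinfun_apply (D2 x)) (at x)"
    using assms(2) unfolding C2_on_def by blast
  have eq: "blinfun_apply (D1 z) (Efield \<epsilon> i z) = Eop \<epsilon> i v z" if "z \<in> \<Omega>" for z
    using frechet_derivative_at[OF d1[rule_format, OF that]] by (simp add: Eop_def)
  obtain E' where E': "(Efield \<epsilon> i has_derivative E') (at q)"
    using Efield_diff[of \<epsilon> i q] unfolding differentiable_def by blast
  have "((\<lambda>z. blinfun_apply (D1 z) (Efield \<epsilon> i z)) has_derivative
     (\<lambda>h. blinfun_apply (D1 q) (E' h) + blinfun_apply (D2 q h) (Efield \<epsilon> i q))) (at q)"
    by (rule bounded_bilinear.FDERIV[OF bounded_bilinear_blinfun_apply d2[rule_format, OF assms(3)] E'])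
  then have "(Eop \<epsilon> i v has_derivative
     (\<lambda>h. blinfun_apply (D1 q) (E' h) + blinfun_apply (D2 q h) (Efield \<epsilon> i q))) (at q)"
    by (rule has_derivative_transform_within_open[OF _ assms(1,3) eq])
  then show ?thesis by (rule differentiableI)
qed

theorem lemma6p5:
  fixes v :: "'n::finite heis \<Rightarrow> real" and \<Omega> :: "'n heis set" and p \<epsilon> :: real
  assumes "1 < p" and "p \<le> 2" and "0 < \<epsilon>" and "\<epsilon> \<le> 1"
    and "open \<Omega>" and "C2_on \<Omega> v"
    and "\<forall>q\<in>\<Omega>. hgrad \<epsilon> v q \<noteq> (\<lambda>k. 0)"
    and "p_harmonic_on \<epsilon> p \<Omega> v"
    and "q \<in> \<Omega>"
  shows "2 * (hnorm (hgrad \<epsilon> v q))\<^sup>2 * hess_norm2 \<epsilon> v q \<ge>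
         1/2 * (1 + (p - 1)\<^sup>2 / (2 * real CARD('n))) *
         (hinner (\<lambda>k. hgrad \<epsilon> v q k / hnorm (hgrad \<epsilon> v q))
                 (hgrad \<epsilon> (\<lambda>z. (hnorm (hgrad \<epsilon> v z))\<^sup>2) q))\<^sup>2"
proof -
  define G where "G k = Eop \<epsilon> k v" for k
  define D where "D k = frechet_derivative (G k) (at q)" for k
  define g where "g k = G k q" for k
  define H where "H i j = D i (Efield \<epsilon> j q)" for i j
  define S where "S z = (\<Sum>k\<in>UNIV. G k z * G k z)" for z
  define s where "s = S q"
  define w where "w = (\<Sum>i\<in>UNIV. \<Sum>j\<in>UNIV. g i * g j * H i j)"
  define t where "t = (\<Sum>i\<in>UNIV. H i i)"
  define S' where "S' h = (\<Sum>k\<in>UNIV. G k q * D k h + D k h * G k q)" for h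
  have GD: "(G k has_derivative D k) (at q)" for k
    unfolding D_def G_def using Eop_diff[OF assms(5,6,9)] frechet_derivative_works by blast
  have SD: "(S has_derivative S') (at q)"
    unfolding S_def S'_def by (intro has_derivative_sum has_derivative_mult GD)
  have Sge: "S z \<ge> 0" for z unfolding S_def by (intro sum_nonneg) auto
  have hn: "(hnorm (hgrad \<epsilon> v z))\<^sup>2 = S z" for z
    using Sge[of z] by (simp add: hnorm_def hinner_def hgrad_def S_def G_def)
  have hn2: "hnorm (hgrad \<epsilon> v z) = sqrt (S z)" for z
    by (simp add: hnorm_def hinner_def hgrad_def S_def G_def)
  have spos: "s > 0"
  proof -
    obtain k where "g k \<noteq> 0" using assms(7,9) by (auto simp: hgrad_def g_def G_def)
    then have "0 < g k * g k" by (auto simp add: zero_less_mult_iff linorder_neq_iff)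
    also have "\<dots> \<le> s" unfolding s_def S_def g_def
      by (rule member_le_sum) auto
    finally show ?thesis .
  qed
  have gradS: "hgrad \<epsilon> (\<lambda>z. (hnorm (hgrad \<epsilon> v z))\<^sup>2) q = (\<lambda>j. S' (Efield \<epsilon> j q))"
  proof -
    have hnf: "(\<lambda>z. (hnorm (hgrad \<epsilon> v z))\<^sup>2) = S" by (rule ext, rule hn)
    show ?thesis unfolding hnf using frechet_derivative_at[OF SD] by (simp add: hgrad_def Eop_def)
  qed
  have S'E: "S' (Efield \<epsilon> j q) = 2 * (\<Sum>i\<in>UNIV. g i * H i j)" for j
    by (simp add: S'_def g_def H_def sum_distrib_left algebra_simps)
  have Hh: "hess_norm2 \<epsilon> v q = (\<Sum>i\<in>UNIV. \<Sum>j\<in>UNIV. (H i j)\<^sup>2)"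
    by (simp add: hess_norm2_def H_def D_def G_def Eop_def)
  define F0 where "F0 = sqrt s powr (p - 2)"
  define d where "d = F0 * (0 * ln (sqrt s) + inverse (sqrt s) / 2 * (p - 2) / sqrt s)"
  have F0pos: "F0 > 0" using spos by (simp add: F0_def)
  have dd: "d = F0 * ((p - 2) / (2 * s))"
    using spos by (simp add: d_def field_simps)
  have phiD: "((\<lambda>x. sqrt x powr (p - 2)) has_real_derivative d) (at s)"
    unfolding d_def F0_def
    by (rule DERIV_powr) (use spos in \<open>auto intro!: derivative_eq_intros\<close>)
  have FD: "((\<lambda>z. sqrt (S z) powr (p - 2)) has_derivative (\<lambda>h. S' h * d)) (at q)"
    using DERIV_compose_FDERIV[OF phiD[unfolded s_def] SD] by simp
  have PD: "((\<lambda>z. sqrt (S z) powr (p - 2) * G k z) has_derivative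
      (\<lambda>h. sqrt (S q) powr (p - 2) * D k h + S' h * d * G k q)) (at q)" for k
    using has_derivative_mult[OF FD GD[of k]] by simp
  have "0 = (\<Sum>k\<in>UNIV. Eop \<epsilon> k (\<lambda>z. hnorm (hgrad \<epsilon> v z) powr (p - 2) * Eop \<epsilon> k v z) q)"
    using assms(8,9) unfolding p_harmonic_on_def by auto
  also have "\<dots> = (\<Sum>k\<in>UNIV. F0 * H k k + S' (Efield \<epsilon> k q) * d * g k)"
    using frechet_derivative_at[OF PD, symmetric]
    by (simp add: hn2 G_def[symmetric] Eop_def F0_def s_def H_def g_def)
  also have "\<dots> = F0 * t + d * 2 * w"
    by (simp add: S'E t_def w_def sum.distrib sum_distrib_left sum_distrib_right algebra_simps)
      (subst sum.swap, simp add: algebra_simps)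
  finally have "F0 * (t + (p - 2) * w / s) = 0"
    unfolding dd using spos by (simp add: field_simps)
  then have tw: "t - w / s = (1 - p) * (w / s)"
  proof -
    have "t + (p - 2) * w / s = 0" using F0pos \<open>F0 * (t + (p - 2) * w / s) = 0\<close> by simp
    then show ?thesis using spos by (simp add: field_simps)
  qed
  have card: "real CARD('n hidx) = real (2 * CARD('n)) + 1"
    by (simp add: card_UNIV_sum)
  have alg': "(\<Sum>i\<in>UNIV. \<Sum>j\<in>UNIV. (H i j)\<^sup>2) \<ge> w\<^sup>2 / s\<^sup>2 + (t - w/s)\<^sup>2 / real (2 * CARD('n))"
    by (rule alg[OF _ spos card]) (auto simp: s_def S_def g_def w_def t_def)
  have main: "(\<Sum>i\<in>UNIV. \<Sum>j\<in>UNIV. (H i j)\<^sup>2) \<ge> (w / s)\<^sup>2 * (1 + (p - 1)\<^sup>2 / (2 * real CARD('n)))"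
  proof -
    have "w\<^sup>2 / s\<^sup>2 + (t - w/s)\<^sup>2 / real (2 * CARD('n)) = (w / s)\<^sup>2 * (1 + (p - 1)\<^sup>2 / (2 * real CARD('n)))"
      unfolding tw using spos by (simp add: power2_eq_square field_simps)
    then show ?thesis using alg' by simp
  qed
  have inner: "hinner (\<lambda>k. hgrad \<epsilon> v q k / hnorm (hgrad \<epsilon> v q))
                 (hgrad \<epsilon> (\<lambda>z. (hnorm (hgrad \<epsilon> v z))\<^sup>2) q) = 2 * w / sqrt s"
  proof -
    have "hinner (\<lambda>k. hgrad \<epsilon> v q k / hnorm (hgrad \<epsilon> v q))
                 (hgrad \<epsilon> (\<lambda>z. (hnorm (hgrad \<epsilon> v z))\<^sup>2) q)
        = (\<Sum>j\<in>UNIV. g j / sqrt s * (2 * (\<Sum>i\<in>UNIV. g i * H i j)))"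
      unfolding gradS S'E hinner_def unfolding hn2[of q] by (simp add: s_def hgrad_def g_def G_def)
    also have "\<dots> = 2 * (\<Sum>j\<in>UNIV. \<Sum>i\<in>UNIV. g i * g j * H i j) / sqrt s"
      by (simp add: sum_distrib_left sum_divide_distrib algebra_simps)
    also have "\<dots> = 2 * w / sqrt s"
      unfolding w_def by (subst sum.swap) simp
    finally show ?thesis .
  qed
  have hs: "(hnorm (hgrad \<epsilon> v q))\<^sup>2 = s" by (simp add: hn s_def)
  have "1/2 * (1 + (p - 1)\<^sup>2 / (2 * real CARD('n))) * (2 * w / sqrt s)\<^sup>2
      = 2 * s * ((w / s)\<^sup>2 * (1 + (p - 1)\<^sup>2 / (2 * real CARD('n))))"
    using spos by (simp add: power_divide field_simps power2_eq_square)
  also have "\<dots> \<le> 2 * s * (\<Sum>i\<in>UNIV. \<Sum>j\<in>UNIV. (H i j)\<^sup>2)"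
    using main spos by simp
  finally show ?thesis unfolding inner hs Hh .
qed

end
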